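(* Let $G=(V,E)$ be an undirected graph on $n$ vertices, let $\alpha\in(0,1)$, and let the jump distribution be uniform, $q_w=1/n$ for all $w\in V$. Suppose $u,v\in V$ are distinct non-adjacent vertices, $v$ has at least one neighbour, and there is a graph automorphism $\sigma$ of $G$ with $\sigma(v)=u$ and $\sigma(u)=v$. Let $G'=(V,E\cup\{uv\})$. Then $$\pi^{G'}_v>\pi^{G}_v\quad\text{and}\quad\pi^{G'}_u>\pi^{G}_u.$$
   Context: For an undirected graph $H$ on $V$, the PageRank of a vertex $w$ with at least one neighbour is $\pi^H_w=\alpha\,\frac{\sum_{x\in V}q_x\phi_{xw}}{1-\frac{1-\alpha}{|\Gamma(w)|}\sum_{i\in\Gamma(w)}\phi_{iw}}$, where $\Gamma(w)$ is the neighbour set in $H$ and $\phi_{xw}$ is the probability that an $\alpha$-random walk on $H$ (at each step with probability $\alpha$ it jumps to a vertex drawn from $\bm q$, otherwise moves to a uniformly random neighbour; a vertex with no neighbours forces a jump) started at $x$ visits $w$ before its first jump. When $H$ has no isolated vertices this is the stationary probability of $w$ under the $\alpha$-random walk. A graph automorphism is a permutation $\sigma$ of $V$ with $\sigma(a)\sigma(b)\in E$ iff $ab\in E$. *)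

theory Defs
  imports Complex_Main
begin

definition simple_graph :: "'a set \<Rightarrow> 'a set set \<Rightarrow> bool" where
  "simple_graph V E \<longleftrightarrow> finite V \<and> (\<forall>e\<in>E. \<exists>a b. a \<in> V \<and> b \<in> V \<and> a \<noteq> b \<and> e = {a, b})"

definition nbrs :: "'a set \<Rightarrow> 'a set set \<Rightarrow> 'a \<Rightarrow> 'a set" where
  "nbrs V E w = {x \<in> V. {w, x} \<in> E}"

definition graph_automorphism :: "'a set \<Rightarrow> 'a set set \<Rightarrow> ('a \<Rightarrow> 'a) \<Rightarrow> bool" where
  "graph_automorphism V E \<sigma> \<longleftrightarrow> bij_betw \<sigma> V V \<and>
     (\<forall>a\<in>V. \<forall>b\<in>V. {\<sigma> a, \<sigma> b} \<in> E \<longleftrightarrow> {a, b} \<in> E)"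

definition first_hit_walks :: "'a set \<Rightarrow> 'a set set \<Rightarrow> 'a \<Rightarrow> 'a \<Rightarrow> nat \<Rightarrow> 'a list set" where
  "first_hit_walks V E x w k = {p. length p = Suc k \<and> set p \<subseteq> V \<and> hd p = x \<and> last p = w
      \<and> w \<notin> set (butlast p) \<and> (\<forall>i<k. {p ! i, p ! Suc i} \<in> E)}"

text \<open>Probability that the alpha-random walk follows path p for its |p|-1 steps
  without jumping: each step moves to a uniformly random neighbour with prob. 1-alpha.\<close>
definition walk_weight :: "real \<Rightarrow> 'a set \<Rightarrow> 'a set set \<Rightarrow> 'a list \<Rightarrow> real" where
  "walk_weight \<alpha> V E p = (\<Prod>i<length p - 1. (1 - \<alpha>) / real (card (nbrs V E (p ! i))))"

text \<open>phi x w: probability that the alpha-random walk started at x visits w before its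
  first jump (sum over the disjoint events "first visit to w at step k, no jump before").\<close>
definition phi :: "real \<Rightarrow> 'a set \<Rightarrow> 'a set set \<Rightarrow> 'a \<Rightarrow> 'a \<Rightarrow> real" where
  "phi \<alpha> V E x w = (\<Sum>k. \<Sum>p\<in>first_hit_walks V E x w k. walk_weight \<alpha> V E p)"

definition pagerank :: "real \<Rightarrow> ('a \<Rightarrow> real) \<Rightarrow> 'a set \<Rightarrow> 'a set set \<Rightarrow> 'a \<Rightarrow> real" where
  "pagerank \<alpha> q V E w =
     \<alpha> * (\<Sum>x\<in>V. q x * phi \<alpha> V E x w) /
     (1 - (1 - \<alpha>) / real (card (nbrs V E w)) * (\<Sum>i\<in>nbrs V E w. phi \<alpha> V E i w))"

end

theory Submission
  imports Defs
begin

definition Top :: "real \<Rightarrow> 'a set \<Rightarrow> 'a set set \<Rightarrow> ('a \<Rightarrow> real) \<Rightarrow> 'a \<Rightarrow> real" where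
  "Top b V E f x = b / real (card (nbrs V E x)) * (\<Sum>y\<in>nbrs V E x. f y)"

definition sol :: "real \<Rightarrow> 'a set \<Rightarrow> 'a set set \<Rightarrow> 'a \<Rightarrow> ('a \<Rightarrow> real) \<Rightarrow> bool" where
  "sol b V E w g \<longleftrightarrow> (\<forall>x\<in>V. g x = (if x = w then 1 else 0) + Top b V E g x)"

lemma nbrs_sub: "nbrs V E x \<subseteq> V" by (auto simp: nbrs_def)

lemma finite_nbrs: "finite V \<Longrightarrow> finite (nbrs V E x)"
  using nbrs_sub finite_subset by metis

lemma Top_le:
  assumes "finite V" "0 \<le> b" "0 \<le> M" "\<forall>y\<in>nbrs V E x. f y \<le> M"
  shows "Top b V E f x \<le> b * M"
proof (cases "card (nbrs V E x) = 0")
  case True then show ?thesis using assms by (simp add: Top_def)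
next
  case False
  have "(\<Sum>y\<in>nbrs V E x. f y) \<le> real (card (nbrs V E x)) * M"
    using sum_bounded_above[of "nbrs V E x" f M] assms by auto
  then have "b / real (card (nbrs V E x)) * (\<Sum>y\<in>nbrs V E x. f y)
      \<le> b / real (card (nbrs V E x)) * (real (card (nbrs V E x)) * M)"
    using assms by (intro mult_left_mono) auto
  also have "\<dots> = b * M" using False by simp
  finally show ?thesis by (simp add: Top_def)
qed

lemma Top_lin: "Top b V E (\<lambda>y. c * f y + d * g y) x = c * Top b V E f x + d * Top b V E g x"
  by (simp add: Top_def sum.distrib sum_distrib_left sum_divide_distrib algebra_simps)

lemma Top_minus: "Top b V E (\<lambda>y. - f y) x = - Top b V E f x"
  by (simp add: Top_def sum_negf)

lemma Top_diff: "Top b V E (\<lambda>y. f y - g y) x = Top b V E f x - Top b V E g x"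
  by (simp add: Top_def sum_subtractf algebra_simps)

lemma Top_sum: "finite I \<Longrightarrow> Top b V E (\<lambda>y. \<Sum>i\<in>I. f i y) x = (\<Sum>i\<in>I. Top b V E (f i) x)"
  by (simp add: Top_def sum_distrib_left sum.swap[of _ I])

lemma Top_cong: "(\<forall>y\<in>V. f y = g y) \<Longrightarrow> Top b V E f x = Top b V E g x"
  unfolding Top_def using nbrs_sub by (metis (no_types, lifting) subsetD sum.cong)

lemma maxp1:
  assumes "finite V" "0 \<le> b" "b < 1" "0 \<le> K"
    and H: "\<forall>x\<in>V. f x \<le> K \<or> f x \<le> Top b V E f x"
  shows "\<forall>x\<in>V. f x \<le> K"
proof (cases "V = {}")
  case True then show ?thesis by simp
next
  case False
  define M where "M = Max (f ` V)"
  have fin: "finite (f ` V)" using assms by simp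
  have Mge: "\<forall>x\<in>V. f x \<le> M" using fin M_def by auto
  obtain x0 where x0: "x0 \<in> V" "f x0 = M"
    using Max_in[OF fin] False M_def by (metis empty_is_image imageE)
  show ?thesis
  proof (cases "M \<le> K")
    case True then show ?thesis using Mge by force
  next
    case False
    then have "f x0 \<le> Top b V E f x0" using H x0 by force
    also have "\<dots> \<le> b * M"
      using Top_le[of V b M E x0 f] assms Mge nbrs_sub False by force
    finally have "M \<le> b * M" using x0 by simp
    then show ?thesis using False assms
      by (smt (verit) mult_less_cancel_right2)
  qed
qed

lemma maxp2:
  assumes "finite V" "0 \<le> b" "b < 1" "0 \<le> K"
    and H: "\<forall>x\<in>V. f x \<le> K + Top b V E f x"
  shows "\<forall>x\<in>V. f x \<le> K / (1 - b)"
proof (cases "V = {}")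
  case True then show ?thesis by simp
next
  case False
  define M where "M = Max (f ` V)"
  have fin: "finite (f ` V)" using assms by simp
  have Mge: "\<forall>x\<in>V. f x \<le> M" using fin M_def by auto
  obtain x0 where x0: "x0 \<in> V" "f x0 = M"
    using Max_in[OF fin] False M_def by (metis empty_is_image imageE)
  have K0: "0 \<le> K / (1 - b)" using assms by simp
  show ?thesis
  proof (cases "M \<le> 0")
    case True then show ?thesis using Mge K0 by force
  next
    case False
    have "f x0 \<le> K + Top b V E f x0" using H x0 by force
    also have "\<dots> \<le> K + b * M"
      using Top_le[of V b M E x0 f] assms Mge nbrs_sub False by force
    finally have "M * (1 - b) \<le> K" using x0 by (simp add: algebra_simps)
    then have "M \<le> K / (1 - b)" using assms by (simp add: field_simps)
    then show ?thesis using Mge by force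
  qed
qed

lemma uniq:
  assumes "finite V" "0 \<le> b" "b < 1"
    and H: "\<forall>x\<in>V. f x = Top b V E f x"
  shows "\<forall>x\<in>V. f x = 0"
proof -
  have a: "\<forall>x\<in>V. f x \<le> 0" using maxp1[of V b 0 f E] assms by force
  have "\<forall>x\<in>V. - f x \<le> 0" using maxp1[of V b 0 "\<lambda>y. - f y" E] assms
    by (force simp: Top_minus)
  then show ?thesis using a by force
qed

lemma sol_uniq:
  assumes "finite V" "0 \<le> b" "b < 1" "sol b V E w g" "sol b V E w h"
  shows "\<forall>x\<in>V. g x = h x"
proof -
  have "\<forall>x\<in>V. g x - h x = Top b V E (\<lambda>y. g y - h y) x"
    using assms(4,5) by (auto simp: sol_def Top_diff)
  from uniq[OF assms(1-3) this] show ?thesis by force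
qed

lemma sol_nonneg:
  assumes "finite V" "0 \<le> b" "b < 1" "sol b V E w g"
  shows "\<forall>x\<in>V. 0 \<le> g x"
proof -
  have "\<forall>x\<in>V. - g x \<le> 0 \<or> - g x \<le> Top b V E (\<lambda>y. - g y) x"
    using assms(4) by (auto simp: sol_def Top_minus)
  from maxp1[OF assms(1-3) _ this] show ?thesis by force
qed

lemma sol_ge1:
  assumes "finite V" "0 \<le> b" "b < 1" "sol b V E w g" "w \<in> V"
  shows "1 \<le> g w"
proof -
  have "0 \<le> Top b V E g w" unfolding Top_def
    using sol_nonneg[OF assms(1-4)] nbrs_sub[of V E w] assms(2)
    by (intro mult_nonneg_nonneg sum_nonneg) auto
  then show ?thesis using assms(4,5) by (auto simp: sol_def)
qed


lemma fhw_0: "w \<in> V \<Longrightarrow> first_hit_walks V E x w 0 = (if x = w then {[w]} else {})"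
proof -
  assume w: "w \<in> V"
  have "p \<in> first_hit_walks V E x w 0 \<longleftrightarrow> p \<in> (if x = w then {[w]} else {})" for p
  proof
    assume "p \<in> first_hit_walks V E x w 0"
    then have "length p = 1" "hd p = x" "last p = w" by (auto simp: first_hit_walks_def)
    then show "p \<in> (if x = w then {[w]} else {})"
      by (cases p) auto
  next
    assume "p \<in> (if x = w then {[w]} else {})"
    then show "p \<in> first_hit_walks V E x w 0" using w
      by (auto simp: first_hit_walks_def split: if_splits)
  qed
  then show ?thesis by blast
qed

lemma fhw_Suc_w: "first_hit_walks V E w w (Suc k) = {}"
proof -
  have False if "p \<in> first_hit_walks V E w w (Suc k)" for p
  proof -
    from that have "length p = Suc (Suc k)" "hd p = w" "w \<notin> set (butlast p)"
      by (auto simp: first_hit_walks_def)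
    then show False by (cases p) (auto split: if_splits)
  qed
  then show ?thesis by blast
qed

lemma fhw_Suc:
  assumes "x \<noteq> w" "x \<in> V"
  shows "first_hit_walks V E x w (Suc k) =
     (\<lambda>p. x # p) ` (\<Union>y\<in>nbrs V E x. first_hit_walks V E y w k)"
proof (rule set_eqI, rule iffI)
  fix p assume p: "p \<in> first_hit_walks V E x w (Suc k)"
  then have len: "length p = Suc (Suc k)" and sp: "set p \<subseteq> V" and hp: "hd p = x"
    and lp: "last p = w" and bp: "w \<notin> set (butlast p)"
    and ep: "\<forall>i<Suc k. {p ! i, p ! Suc i} \<in> E"
    by (auto simp: first_hit_walks_def)
  obtain q where pq: "p = x # q" using len hp by (cases p) auto
  have qne: "q \<noteq> []" using len pq by auto
  have hq: "hd q = q ! 0" using qne by (simp add: hd_conv_nth)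
  have "{x, hd q} \<in> E" using ep[rule_format, of 0] pq hq by simp
  moreover have "hd q \<in> V" using sp pq qne by auto
  ultimately have y: "hd q \<in> nbrs V E x" by (simp add: nbrs_def)
  have "q \<in> first_hit_walks V E (hd q) w k"
    unfolding first_hit_walks_def
  proof (intro CollectI conjI allI impI)
    show "length q = Suc k" using len pq by simp
    show "set q \<subseteq> V" using sp pq by simp
    show "hd q = hd q" by simp
    show "last q = w" using lp pq qne by simp
    show "w \<notin> set (butlast q)" using bp pq qne by simp
    fix i assume "i < k"
    then show "{q ! i, q ! Suc i} \<in> E" using ep[rule_format, of "Suc i"] pq by simp
  qed
  then show "p \<in> (\<lambda>p. x # p) ` (\<Union>y\<in>nbrs V E x. first_hit_walks V E y w k)"
    using y pq by blast
next
  fix p assume "p \<in> (\<lambda>p. x # p) ` (\<Union>y\<in>nbrs V E x. first_hit_walks V E y w k)"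
  then obtain y q where y: "y \<in> nbrs V E x" and q: "q \<in> first_hit_walks V E y w k"
    and pq: "p = x # q" by blast
  from q have len: "length q = Suc k" and sq: "set q \<subseteq> V" and hq: "hd q = y"
    and lq: "last q = w" and bq: "w \<notin> set (butlast q)"
    and eq: "\<forall>i<k. {q ! i, q ! Suc i} \<in> E"
    by (auto simp: first_hit_walks_def)
  have qne: "q \<noteq> []" using len by auto
  have e0: "{x, y} \<in> E" using y by (simp add: nbrs_def)
  show "p \<in> first_hit_walks V E x w (Suc k)"
    unfolding first_hit_walks_def
  proof (intro CollectI conjI allI impI)
    show "length p = Suc (Suc k)" using len pq by simp
    show "set p \<subseteq> V" using sq pq assms by simp
    show "hd p = x" using pq by simp
    show "last p = w" using lq pq qne by simp
    show "w \<notin> set (butlast p)" using bq pq qne assms by simp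
    fix i assume i: "i < Suc k"
    show "{p ! i, p ! Suc i} \<in> E"
    proof (cases i)
      case 0 then show ?thesis using pq e0 hq qne by (simp add: hd_conv_nth)
    next
      case (Suc j) then show ?thesis using pq eq i by simp
    qed
  qed
qed

lemma ww_Cons:
  assumes "q \<noteq> []"
  shows "walk_weight \<alpha> V E (x # q) = (1 - \<alpha>) / real (card (nbrs V E x)) * walk_weight \<alpha> V E q"
proof -
  obtain m where m: "length q = Suc m" using assms by (cases q) auto
  show ?thesis unfolding walk_weight_def using m
    by (simp add: prod.lessThan_Suc_shift del: prod.lessThan_Suc)
qed

lemma ww_nonneg: "\<alpha> \<le> 1 \<Longrightarrow> 0 \<le> walk_weight \<alpha> V E p"
  unfolding walk_weight_def by (intro prod_nonneg) auto

lemma fhw_finite: "finite V \<Longrightarrow> finite (first_hit_walks V E x w k)"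
proof -
  assume "finite V"
  then have "finite {p. set p \<subseteq> V \<and> length p = Suc k}" by (rule finite_lists_length_eq)
  moreover have "first_hit_walks V E x w k \<subseteq> {p. set p \<subseteq> V \<and> length p = Suc k}"
    by (auto simp: first_hit_walks_def)
  ultimately show ?thesis by (rule finite_subset[rotated])
qed

definition aw :: "real \<Rightarrow> 'a set \<Rightarrow> 'a set set \<Rightarrow> 'a \<Rightarrow> 'a \<Rightarrow> nat \<Rightarrow> real" where
  "aw \<alpha> V E x w k = (\<Sum>p\<in>first_hit_walks V E x w k. walk_weight \<alpha> V E p)"

lemma aw_0: "w \<in> V \<Longrightarrow> aw \<alpha> V E x w 0 = (if x = w then 1 else 0)"
  by (simp add: aw_def fhw_0 walk_weight_def)

lemma aw_Suc:
  assumes "finite V" "x \<in> V"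
  shows "aw \<alpha> V E x w (Suc k) = (if x = w then 0 else
     (1 - \<alpha>) / real (card (nbrs V E x)) * (\<Sum>y\<in>nbrs V E x. aw \<alpha> V E y w k))"
proof (cases "x = w")
  case True then show ?thesis by (simp add: aw_def fhw_Suc_w)
next
  case False
  let ?c = "(1 - \<alpha>) / real (card (nbrs V E x))"
  have inj: "inj_on (\<lambda>p. x # p) A" for A :: "'a list set" by (simp add: inj_on_def)
  have disj: "pairwise (\<lambda>y y'. first_hit_walks V E y w k \<inter> first_hit_walks V E y' w k = {}) (nbrs V E x)"
    unfolding pairwise_def by (auto simp: first_hit_walks_def)
  have ne: "p \<in> first_hit_walks V E y w k \<Longrightarrow> p \<noteq> []" for y p
    by (auto simp: first_hit_walks_def)
  have "aw \<alpha> V E x w (Suc k) = (\<Sum>p\<in>(\<Union>y\<in>nbrs V E x. first_hit_walks V E y w k). walk_weight \<alpha> V E (x # p))"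
    unfolding aw_def fhw_Suc[OF False assms(2)] by (simp add: sum.reindex[OF inj])
  also have "\<dots> = (\<Sum>y\<in>nbrs V E x. \<Sum>p\<in>first_hit_walks V E y w k. walk_weight \<alpha> V E (x # p))"
    by (rule sum.UNION_disjoint) (use finite_nbrs[OF assms(1)] fhw_finite[OF assms(1)] in \<open>auto simp: first_hit_walks_def\<close>)
  also have "\<dots> = (\<Sum>y\<in>nbrs V E x. \<Sum>p\<in>first_hit_walks V E y w k. ?c * walk_weight \<alpha> V E p)"
    by (intro sum.cong refl) (simp add: ww_Cons ne)
  also have "\<dots> = ?c * (\<Sum>y\<in>nbrs V E x. aw \<alpha> V E y w k)"
    by (simp add: aw_def sum_distrib_left)
  finally show ?thesis using False by simp
qed


lemma Top_nonneg:
  assumes "0 \<le> b" "\<forall>y\<in>nbrs V E x. 0 \<le> f y"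
  shows "0 \<le> Top b V E f x"
  unfolding Top_def using assms by (intro mult_nonneg_nonneg sum_nonneg) auto

lemma aw_bound:
  assumes "finite V" "0 < \<alpha>" "\<alpha> < 1" "w \<in> V"
  shows "\<forall>x\<in>V. 0 \<le> aw \<alpha> V E x w k \<and> aw \<alpha> V E x w k \<le> (1 - \<alpha>) ^ k"
proof (induction k)
  case 0 then show ?case using assms by (simp add: aw_0)
next
  case (Suc k)
  show ?case
  proof
    fix x assume x: "x \<in> V"
    have eq: "aw \<alpha> V E x w (Suc k) = (if x = w then 0 else Top (1 - \<alpha>) V E (\<lambda>y. aw \<alpha> V E y w k) x)"
      using aw_Suc[OF assms(1) x] by (simp add: Top_def)
    have "Top (1 - \<alpha>) V E (\<lambda>y. aw \<alpha> V E y w k) x \<le> (1 - \<alpha>) * (1 - \<alpha>) ^ k"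
      using Top_le[of V "1 - \<alpha>" "(1 - \<alpha>) ^ k" E x "\<lambda>y. aw \<alpha> V E y w k"] Suc nbrs_sub[of V E x] assms by auto
    moreover have "0 \<le> Top (1 - \<alpha>) V E (\<lambda>y. aw \<alpha> V E y w k) x"
      using Top_nonneg[of "1 - \<alpha>" V E x "\<lambda>y. aw \<alpha> V E y w k"] Suc nbrs_sub[of V E x] assms by auto
    ultimately show "0 \<le> aw \<alpha> V E x w (Suc k) \<and> aw \<alpha> V E x w (Suc k) \<le> (1 - \<alpha>) ^ Suc k"
      using eq assms by auto
  qed
qed

lemma aw_summable:
  assumes "finite V" "0 < \<alpha>" "\<alpha> < 1" "w \<in> V" "x \<in> V"
  shows "summable (aw \<alpha> V E x w)"
proof (rule summable_comparison_test')
  show "summable (\<lambda>n. (1 - \<alpha>) ^ n)" using assms by (intro summable_geometric) auto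
  fix n show "norm (aw \<alpha> V E x w n) \<le> (1 - \<alpha>) ^ n"
    using aw_bound[OF assms(1-4), of E n] assms(5) by auto
qed

lemma phi_aw: "phi \<alpha> V E x w = (\<Sum>k. aw \<alpha> V E x w k)"
  by (simp add: phi_def aw_def)

lemma phi_rec:
  assumes "finite V" "0 < \<alpha>" "\<alpha> < 1" "w \<in> V" "x \<in> V"
  shows "phi \<alpha> V E x w = (if x = w then 1 else Top (1 - \<alpha>) V E (\<lambda>y. phi \<alpha> V E y w) x)"
proof -
  have s: "summable (aw \<alpha> V E x w)" by (rule aw_summable[OF assms])
  have sp: "suminf (aw \<alpha> V E x w) = (\<Sum>k. aw \<alpha> V E x w (Suc k)) + aw \<alpha> V E x w 0"
    using suminf_split_head[OF s] by linarith
  show ?thesis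
  proof (cases "x = w")
    case True
    have "aw \<alpha> V E x w (Suc k) = 0" for k using aw_Suc[OF assms(1,5), where E=E and w=w and k=k and \<alpha>=\<alpha>] True by simp
    then have "(\<Sum>k. aw \<alpha> V E x w (Suc k)) = 0" by simp
    moreover have "aw \<alpha> V E x w 0 = 1" using aw_0[OF assms(4), where \<alpha>=\<alpha> and E=E and x=x] True by simp
    ultimately have "phi \<alpha> V E x w = 1" using sp unfolding phi_aw by linarith
    then show ?thesis using True by simp
  next
    case False
    let ?c = "(1 - \<alpha>) / real (card (nbrs V E x))"
    have sy: "\<And>y. y \<in> nbrs V E x \<Longrightarrow> summable (aw \<alpha> V E y w)"
      by (rule aw_summable[OF assms(1-4)]) (simp add: nbrs_def)
    have a0: "aw \<alpha> V E x w 0 = 0" using aw_0[OF assms(4), where \<alpha>=\<alpha> and E=E and x=x] False by (simp only: if_False)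
    have "aw \<alpha> V E x w (Suc k) = ?c * (\<Sum>y\<in>nbrs V E x. aw \<alpha> V E y w k)" for k
      using aw_Suc[OF assms(1,5), where E=E and w=w and k=k and \<alpha>=\<alpha>] False by (simp only: if_False)
    then have "(\<Sum>k. aw \<alpha> V E x w (Suc k)) = (\<Sum>k. ?c * (\<Sum>y\<in>nbrs V E x. aw \<alpha> V E y w k))"
      by (simp only:)
    also have "\<dots> = ?c * (\<Sum>k. \<Sum>y\<in>nbrs V E x. aw \<alpha> V E y w k)"
      using suminf_mult[OF summable_sum[of "nbrs V E x" "\<lambda>y. aw \<alpha> V E y w", OF sy], of ?c] by simp
    also have "\<dots> = ?c * (\<Sum>y\<in>nbrs V E x. \<Sum>k. aw \<alpha> V E y w k)"
      using suminf_sum[of "nbrs V E x" "\<lambda>y. aw \<alpha> V E y w", OF sy] by simp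
    also have "\<dots> = Top (1 - \<alpha>) V E (\<lambda>y. phi \<alpha> V E y w) x"
      by (simp only: Top_def phi_aw)
    finally have "phi \<alpha> V E x w = Top (1 - \<alpha>) V E (\<lambda>y. phi \<alpha> V E y w) x"
      using sp a0 unfolding phi_aw by linarith
    then show ?thesis using False by simp
  qed
qed

lemma phi_le1:
  assumes "finite V" "0 < \<alpha>" "\<alpha> < 1" "w \<in> V"
  shows "\<forall>x\<in>V. phi \<alpha> V E x w \<le> 1"
proof -
  have "\<forall>x\<in>V. phi \<alpha> V E x w \<le> 1 \<or> phi \<alpha> V E x w \<le> Top (1 - \<alpha>) V E (\<lambda>y. phi \<alpha> V E y w) x"
    using phi_rec[OF assms] by (metis order_refl)
  from maxp1[OF assms(1) _ _ _ this] assms show ?thesis by auto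
qed

lemma phi_nonneg:
  assumes "finite V" "0 < \<alpha>" "\<alpha> < 1" "w \<in> V" "x \<in> V"
  shows "0 \<le> phi \<alpha> V E x w"
  unfolding phi_aw using aw_bound[OF assms(1-4)] assms(5)
  by (intro suminf_nonneg aw_summable[OF assms]) auto

lemma phi_sol:
  assumes "finite V" "0 < \<alpha>" "\<alpha> < 1" "w \<in> V" "nbrs V E w \<noteq> {}"
  defines "R \<equiv> Top (1 - \<alpha>) V E (\<lambda>y. phi \<alpha> V E y w) w"
  shows "R < 1" and "sol (1 - \<alpha>) V E w (\<lambda>x. phi \<alpha> V E x w / (1 - R))"
proof -
  have "R \<le> (1 - \<alpha>) * 1" unfolding R_def
    using Top_le[of V "1 - \<alpha>" 1 E w "\<lambda>y. phi \<alpha> V E y w"] phi_le1[OF assms(1-4)] nbrs_sub[of V E w] assms by auto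
  then show R1: "R < 1" using assms by simp
  show "sol (1 - \<alpha>) V E w (\<lambda>x. phi \<alpha> V E x w / (1 - R))"
    unfolding sol_def
  proof
    fix x assume x: "x \<in> V"
    have lin: "Top (1 - \<alpha>) V E (\<lambda>y. phi \<alpha> V E y w / (1 - R)) x
        = Top (1 - \<alpha>) V E (\<lambda>y. phi \<alpha> V E y w) x / (1 - R)"
      using Top_lin[of "1 - \<alpha>" V E "1 / (1 - R)" "\<lambda>y. phi \<alpha> V E y w" 0 "\<lambda>y. 0" x] by simp
    show "phi \<alpha> V E x w / (1 - R) = (if x = w then 1 else 0) + Top (1 - \<alpha>) V E (\<lambda>y. phi \<alpha> V E y w / (1 - R)) x"
    proof (cases "x = w")
      case True
      then show ?thesis using phi_rec[OF assms(1-4) x] lin R1 unfolding R_def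
        by (simp add: field_simps)
    next
      case False
      then show ?thesis using phi_rec[OF assms(1-4) x] lin by simp
    qed
  qed
qed

lemma sol_exists:
  assumes "finite V" "0 < \<alpha>" "\<alpha> < 1" "w \<in> V"
  shows "\<exists>g. sol (1 - \<alpha>) V E w g"
proof (cases "nbrs V E w = {}")
  case False then show ?thesis using phi_sol[OF assms False] by blast
next
  case True
  have "sol (1 - \<alpha>) V E w (\<lambda>x. if x = w then 1 else 0)"
    unfolding sol_def
  proof
    fix x assume x: "x \<in> V"
    have "w \<notin> nbrs V E x" using True x by (auto simp: nbrs_def insert_commute)
    then have "(\<Sum>y\<in>nbrs V E x. (if y = w then 1 else 0 :: real)) = 0"
      by (intro sum.neutral) auto
    then show "(if x = w then 1 else 0) = (if x = w then 1 else 0) + Top (1 - \<alpha>) V E (\<lambda>x. if x = w then 1 else 0) x"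
      by (simp add: Top_def)
  qed
  then show ?thesis by blast
qed

lemma pagerank_sol:
  assumes "finite V" "0 < \<alpha>" "\<alpha> < 1" "w \<in> V" "nbrs V E w \<noteq> {}"
    and g: "sol (1 - \<alpha>) V E w g"
  shows "pagerank \<alpha> (\<lambda>x. 1 / real (card V)) V E w = \<alpha> / real (card V) * (\<Sum>x\<in>V. g x)"
proof -
  define R where "R = Top (1 - \<alpha>) V E (\<lambda>y. phi \<alpha> V E y w) w"
  have R1: "R < 1" and S: "sol (1 - \<alpha>) V E w (\<lambda>x. phi \<alpha> V E x w / (1 - R))"
    using phi_sol[OF assms(1-5)] unfolding R_def by auto
  have eq: "\<forall>x\<in>V. phi \<alpha> V E x w / (1 - R) = g x"
    using sol_uniq[OF assms(1) _ _ S g] assms by auto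
  have "pagerank \<alpha> (\<lambda>x. 1 / real (card V)) V E w
      = \<alpha> * (\<Sum>x\<in>V. 1 / real (card V) * phi \<alpha> V E x w) / (1 - R)"
    unfolding pagerank_def R_def Top_def by (simp add: mult.assoc)
  also have "\<dots> = \<alpha> / real (card V) * (\<Sum>x\<in>V. phi \<alpha> V E x w / (1 - R))"
  proof -
    have "(\<Sum>x\<in>V. 1 / real (card V) * phi \<alpha> V E x w) = 1 / real (card V) * (\<Sum>x\<in>V. phi \<alpha> V E x w)"
      by (rule sum_distrib_left[symmetric])
    moreover have "(\<Sum>x\<in>V. phi \<alpha> V E x w / (1 - R)) = (\<Sum>x\<in>V. phi \<alpha> V E x w) / (1 - R)"
      by (rule sum_divide_distrib[symmetric])
    ultimately show ?thesis by simp
  qed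
  also have "\<dots> = \<alpha> / real (card V) * (\<Sum>x\<in>V. g x)"
    using eq by simp
  finally show ?thesis .
qed


lemma inj_pair:
  assumes "inj_on \<sigma> V" "a \<in> V" "b \<in> V" "c \<in> V" "d \<in> V"
  shows "({\<sigma> a, \<sigma> b} = {\<sigma> c, \<sigma> d}) = ({a, b} = {c, d})"
proof -
  have "{\<sigma> a, \<sigma> b} = \<sigma> ` {a, b}" "{\<sigma> c, \<sigma> d} = \<sigma> ` {c, d}" by auto
  then show ?thesis using inj_on_image_eq_iff[OF assms(1), of "{a,b}" "{c,d}"] assms by simp
qed

lemma aut_insert:
  assumes "graph_automorphism V E \<sigma>" "u \<in> V" "v \<in> V" "\<sigma> v = u" "\<sigma> u = v"
  shows "graph_automorphism V (insert {u, v} E) \<sigma>"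
proof -
  have bij: "bij_betw \<sigma> V V" and H: "\<forall>a\<in>V. \<forall>b\<in>V. {\<sigma> a, \<sigma> b} \<in> E \<longleftrightarrow> {a, b} \<in> E"
    using assms(1) by (auto simp: graph_automorphism_def)
  have inj: "inj_on \<sigma> V" using bij by (simp add: bij_betw_def)
  have "{\<sigma> a, \<sigma> b} = {u, v} \<longleftrightarrow> {a, b} = {v, u}" if "a \<in> V" "b \<in> V" for a b
    using inj_pair[OF inj that assms(3) assms(2)] assms(4,5) by simp
  then show ?thesis using bij H unfolding graph_automorphism_def
    by (auto simp: insert_commute)
qed

lemma nbrs_aut:
  assumes "graph_automorphism V E \<sigma>" "x \<in> V"
  shows "nbrs V E (\<sigma> x) = \<sigma> ` nbrs V E x"
proof -
  have bij: "bij_betw \<sigma> V V" and H: "\<forall>a\<in>V. \<forall>b\<in>V. {\<sigma> a, \<sigma> b} \<in> E \<longleftrightarrow> {a, b} \<in> E"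
    using assms(1) by (auto simp: graph_automorphism_def)
  have im: "\<sigma> ` V = V" using bij by (simp add: bij_betw_def)
  show ?thesis
  proof (rule set_eqI, rule iffI)
    fix y assume "y \<in> nbrs V E (\<sigma> x)"
    then have y: "y \<in> V" "{\<sigma> x, y} \<in> E" by (auto simp: nbrs_def)
    then obtain z where z: "z \<in> V" "y = \<sigma> z" using im by (metis imageE)
    then have "{x, z} \<in> E" using H assms(2) y by auto
    then show "y \<in> \<sigma> ` nbrs V E x" using z by (auto simp: nbrs_def)
  next
    fix y assume "y \<in> \<sigma> ` nbrs V E x"
    then obtain z where z: "z \<in> V" "{x, z} \<in> E" "y = \<sigma> z" by (auto simp: nbrs_def)
    then show "y \<in> nbrs V E (\<sigma> x)" using H assms(2) im by (auto simp: nbrs_def)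
  qed
qed

lemma card_nbrs_aut:
  assumes "graph_automorphism V E \<sigma>" "x \<in> V"
  shows "card (nbrs V E (\<sigma> x)) = card (nbrs V E x)"
proof -
  have "inj_on \<sigma> V" using assms(1) by (simp add: graph_automorphism_def bij_betw_def)
  then have "inj_on \<sigma> (nbrs V E x)" using nbrs_sub inj_on_subset by metis
  then show ?thesis using nbrs_aut[OF assms] card_image by metis
qed

lemma Top_aut:
  assumes "graph_automorphism V E \<sigma>" "x \<in> V"
  shows "Top b V E g (\<sigma> x) = Top b V E (\<lambda>y. g (\<sigma> y)) x"
proof -
  have "inj_on \<sigma> V" using assms(1) by (simp add: graph_automorphism_def bij_betw_def)
  then have inj: "inj_on \<sigma> (nbrs V E x)" using nbrs_sub inj_on_subset by metis
  show ?thesis unfolding Top_def card_nbrs_aut[OF assms] nbrs_aut[OF assms]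
    by (simp add: sum.reindex[OF inj] card_image[OF inj])
qed

lemma sol_aut:
  assumes "graph_automorphism V E \<sigma>" "w' \<in> V" "sol b V E (\<sigma> w') g"
  shows "sol b V E w' (\<lambda>x. g (\<sigma> x))"
  unfolding sol_def
proof
  fix x assume x: "x \<in> V"
  have bij: "bij_betw \<sigma> V V" using assms(1) by (simp add: graph_automorphism_def)
  then have sx: "\<sigma> x \<in> V" using x by (meson bij_betwE)
  have inj: "inj_on \<sigma> V" using bij by (simp add: bij_betw_def)
  have eq: "(\<sigma> x = \<sigma> w') = (x = w')" using inj x assms(2) by (meson inj_on_eq_iff)
  show "g (\<sigma> x) = (if x = w' then 1 else 0) + Top b V E (\<lambda>x. g (\<sigma> x)) x"
    using assms(3) sx unfolding sol_def eq[symmetric] Top_aut[OF assms(1) x, symmetric] by blast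
qed


lemma doubleton_eq: "({a, b} = {c, d}) = (a = c \<and> b = d \<or> a = d \<and> b = c)"
  by (metis doubleton_eq_iff)

lemma nbrs_ins:
  assumes "x \<in> V" "u \<in> V" "v \<in> V"
  shows "nbrs V (insert {u, v} E) x =
    (if x = u then insert v (nbrs V E x) else if x = v then insert u (nbrs V E x) else nbrs V E x)"
  using assms by (auto simp: nbrs_def doubleton_eq)

lemma Top_ins:
  assumes fin: "finite V" and "y \<notin> nbrs V E x"
    and "nbrs V E' x = insert y (nbrs V E x)"
  shows "Top b V E' g x = b / (real (card (nbrs V E x)) + 1) * (g y + (\<Sum>z\<in>nbrs V E x. g z))"
  using assms finite_nbrs[OF fin, of E x] by (simp add: Top_def)

lemma sum_three:
  fixes f :: "'a \<Rightarrow> real"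
  assumes "finite V" "u \<in> V" "v \<in> V" "y \<in> V" "u \<noteq> v" "u \<noteq> y" "v \<noteq> y"
    and "\<forall>x\<in>V. 0 \<le> f x"
  shows "f u + f v + f y \<le> (\<Sum>x\<in>V. f x)"
proof -
  have "(\<Sum>x\<in>{u, v, y}. f x) \<le> (\<Sum>x\<in>V. f x)"
    by (rule sum_mono2) (use assms in auto)
  then show ?thesis using assms by simp
qed

lemma Top_lin3:
  "Top b V E (\<lambda>y. a * f1 y + c * f2 y + e * f3 y) x
     = a * Top b V E f1 x + c * Top b V E f2 x + e * Top b V E f3 x"
proof -
  have "Top b V E (\<lambda>y. a * f1 y + c * f2 y + e * f3 y) x
      = 1 * Top b V E (\<lambda>y. a * f1 y + c * f2 y) x + e * Top b V E f3 x"
    using Top_lin[of b V E 1 "\<lambda>y. a * f1 y + c * f2 y" e f3 x] by simp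
  also have "Top b V E (\<lambda>y. a * f1 y + c * f2 y) x = a * Top b V E f1 x + c * Top b V E f2 x"
    by (rule Top_lin)
  finally show ?thesis by simp
qed

lemma alg_id:
  fixes D b x S :: real
  assumes "D > 0"
  shows "b / (D + 1) * (x + S) = b / D * S + (b * x - b / D * S) / (D + 1)"
proof -
  have h: "D + 1 > 0" using assms by simp
  have "b / D * S + (b * x - b / D * S) / (D + 1) = (b / D * S * (D + 1) + (b * x - b / D * S)) / (D + 1)"
    using h by (simp add: add_divide_distrib)
  also have "b / D * S * (D + 1) + (b * x - b / D * S) = b * S + b * x"
    using assms by (simp add: algebra_simps add_divide_distrib)
  finally show ?thesis by (simp add: algebra_simps)
qed

lemma main_v:
  fixes V :: "'a set" and E :: "'a set set" and \<alpha> :: real and u v :: 'a and \<sigma> :: "'a \<Rightarrow> 'a"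
  assumes sg: "simple_graph V E"
    and a0: "0 < \<alpha>" and a1: "\<alpha> < 1"
    and uV: "u \<in> V" and vV: "v \<in> V" and uv: "u \<noteq> v" and nE: "{u, v} \<notin> E"
    and nv: "nbrs V E v \<noteq> {}"
    and aut: "graph_automorphism V E \<sigma>" and sv: "\<sigma> v = u" and su: "\<sigma> u = v"
  shows "pagerank \<alpha> (\<lambda>w. 1 / real (card V)) V (insert {u, v} E) v
           > pagerank \<alpha> (\<lambda>w. 1 / real (card V)) V E v"
proof -
  define b where "b = 1 - \<alpha>"
  define E' where "E' = insert {u, v} E"
  have fin: "finite V" using sg by (simp add: simple_graph_def)
  have b0: "0 < b" "b < 1" "0 \<le> b" using a0 a1 by (auto simp: b_def)
  have aut': "graph_automorphism V E' \<sigma>" unfolding E'_def by (rule aut_insert[OF aut uV vV sv su])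
  define d where "d = card (nbrs V E v)"
  have d0: "0 < d" using nv finite_nbrs[OF fin] by (simp add: d_def card_gt_0_iff)
  have du: "card (nbrs V E u) = d" using card_nbrs_aut[OF aut vV] sv by (simp add: d_def)
  have vnu: "v \<notin> nbrs V E u" using nE by (simp add: nbrs_def)
  have unv: "u \<notin> nbrs V E v" using nE by (simp add: nbrs_def insert_commute)
  have Nu: "nbrs V E' u = insert v (nbrs V E u)" using nbrs_ins[OF uV uV vV] by (simp add: E'_def)
  have Nv: "nbrs V E' v = insert u (nbrs V E v)" using nbrs_ins[OF vV uV vV] uv by (simp add: E'_def)
  have Nx: "nbrs V E' x = nbrs V E x" if "x \<in> V" "x \<noteq> u" "x \<noteq> v" for x
    using nbrs_ins[OF that(1) uV vV] that by (simp add: E'_def)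
  obtain g where g: "sol b V E v g" using sol_exists[OF fin a0 a1 vV] b_def by blast
  obtain g1 where g1: "sol b V E' u g1" using sol_exists[OF fin a0 a1 uV] b_def by blast
  obtain g2 where g2: "sol b V E' v g2" using sol_exists[OF fin a0 a1 vV] b_def by blast
  have gnn: "\<forall>x\<in>V. 0 \<le> g x" using sol_nonneg[OF fin b0(3,2) g] .
  have g1nn: "\<forall>x\<in>V. 0 \<le> g1 x" using sol_nonneg[OF fin b0(3,2) g1] .
  have g2nn: "\<forall>x\<in>V. 0 \<le> g2 x" using sol_nonneg[OF fin b0(3,2) g2] .
  define G where "G w = (SOME h. sol b V E w h)" for w
  have G: "sol b V E w (G w)" if "w \<in> V" for w
    unfolding G_def using sol_exists[OF fin a0 a1 that] b_def by (metis someI_ex)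
  have Gnn: "0 \<le> G w x" if "w \<in> V" "x \<in> V" for w x
    using sol_nonneg[OF fin b0(3,2) G[OF that(1)]] that(2) by blast
  define s where "s x = (\<Sum>w\<in>V. G w x)" for x
  have s_eq: "\<forall>x\<in>V. s x \<le> 1 + Top b V E s x"
  proof
    fix x assume x: "x \<in> V"
    have "s x = (\<Sum>w\<in>V. (if x = w then 1 else 0) + Top b V E (G w) x)"
      unfolding s_def using G x unfolding sol_def by (intro sum.cong) auto
    also have "\<dots> = 1 + (\<Sum>w\<in>V. Top b V E (G w) x)"
      using x fin by (simp add: sum.distrib)
    also have "(\<Sum>w\<in>V. Top b V E (G w) x) = Top b V E s x"
      unfolding s_def using Top_sum[OF fin, of b V E "\<lambda>w y. G w y" x] by simp
    finally show "s x \<le> 1 + Top b V E s x" by simp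
  qed
  have s_le: "s v \<le> 1 / \<alpha>"
    using maxp2[OF fin b0(3,2) _ s_eq] vV b_def by simp
  obtain y where y: "y \<in> nbrs V E v" using nv by blast
  have yV: "y \<in> V" using y by (simp add: nbrs_def)
  have yu: "y \<noteq> u" using y unv by blast
  have yv: "y \<noteq> v"
  proof
    assume "y = v"
    then have "{v} \<in> E" using y by (simp add: nbrs_def)
    then obtain a c where "a \<noteq> c" "{v} = {a, c}" using sg unfolding simple_graph_def by blast
    then show False by (metis insert_iff singletonD)
  qed
  have Gy_pos: "0 < G y v"
  proof -
    have "G y v = Top b V E (G y) v" using G[OF yV] vV yv unfolding sol_def by auto
    also have "Top b V E (G y) v = b / real d * (\<Sum>z\<in>nbrs V E v. G y z)"
      by (simp add: Top_def d_def)
    also have "\<dots> \<ge> b / real d * G y y"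
    proof (rule mult_left_mono)
      show "G y y \<le> (\<Sum>z\<in>nbrs V E v. G y z)"
        by (rule member_le_sum) (use y finite_nbrs[OF fin] Gnn[OF yV] in \<open>auto simp: nbrs_def\<close>)
    qed (use b0 in auto)
    finally have "b / real d * G y y \<le> G y v" .
    moreover have "1 \<le> G y y" by (rule sol_ge1[OF fin b0(3,2) G[OF yV] yV])
    moreover have "0 < b / real d" using b0 d0 by simp
    ultimately show ?thesis by (smt (verit) mult_le_cancel_left1)
  qed
  have gu_eq: "g u = G u v"
  proof -
    have "sol b V E v (\<lambda>x. G u (\<sigma> x))" using sol_aut[OF aut vV] G[OF uV] sv by simp
    then have "\<forall>x\<in>V. G u (\<sigma> x) = g x" using sol_uniq[OF fin b0(3,2) _ g] by blast
    then show ?thesis using uV su by force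
  qed
  have gv_eq: "g v = G v v" using sol_uniq[OF fin b0(3,2) g G[OF vV]] vV by blast
  have key: "g u + g v < 1 / \<alpha>"
  proof -
    have "G u v + G v v + G y v \<le> s v"
      unfolding s_def using sum_three[OF fin uV vV yV uv yu[symmetric] yv[symmetric], of "\<lambda>w. G w v"]
        Gnn vV by blast
    then show ?thesis using s_le Gy_pos gu_eq gv_eq by linarith
  qed
  have C_eq: "(\<Sum>x\<in>V. g1 x) = (\<Sum>x\<in>V. g2 x)"
  proof -
    have "sol b V E' v (\<lambda>x. g1 (\<sigma> x))" using sol_aut[OF aut' vV] g1 sv by simp
    then have eq: "\<forall>x\<in>V. g1 (\<sigma> x) = g2 x" using sol_uniq[OF fin b0(3,2) _ g2] by blast
    have bij: "bij_betw \<sigma> V V" using aut by (simp add: graph_automorphism_def)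
    have "(\<Sum>x\<in>V. g1 x) = (\<Sum>x\<in>V. g1 (\<sigma> x))"
      using sum.reindex_bij_betw[OF bij, of g1] by simp
    also have "\<dots> = (\<Sum>x\<in>V. g2 x)" using eq by simp
    finally show ?thesis .
  qed
  have C_pos: "1 \<le> (\<Sum>x\<in>V. g2 x)"
  proof -
    have "g2 v \<le> (\<Sum>x\<in>V. g2 x)" by (rule member_le_sum) (use g2nn vV fin in auto)
    moreover have "1 \<le> g2 v" by (rule sol_ge1[OF fin b0(3,2) g2 vV])
    ultimately show ?thesis by simp
  qed
  define ru where "ru = (b * g v - g u) / (real d + 1)"
  define rv where "rv = (b * g u - g v + 1) / (real d + 1)"
  have pert: "Top b V E' g x = Top b V E g x + (if x = u then ru else 0) + (if x = v then rv else 0)"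
    if x: "x \<in> V" for x
  proof -
    consider "x = u" | "x = v" | "x \<noteq> u" "x \<noteq> v" by blast
    then show ?thesis
    proof cases
      case 1
      let ?S = "\<Sum>z\<in>nbrs V E u. g z"
      have T: "Top b V E g u = b / real d * ?S" by (simp add: Top_def du)
      have gu: "g u = b / real d * ?S" using g uV uv T unfolding sol_def by auto
      have "Top b V E' g u = b / (real d + 1) * (g v + ?S)"
        using Top_ins[OF fin vnu Nu] du by simp
      also have "\<dots> = b / real d * ?S + ru"
        unfolding ru_def gu using alg_id[of "real d" b "g v" ?S] d0 by simp
      finally show ?thesis using 1 T uv by simp
    next
      case 2
      let ?S = "\<Sum>z\<in>nbrs V E v. g z"
      have T: "Top b V E g v = b / real d * ?S" by (simp add: Top_def d_def)
      have gv: "g v = 1 + b / real d * ?S" using g vV T unfolding sol_def by auto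
      have "Top b V E' g v = b / (real d + 1) * (g u + ?S)"
        using Top_ins[OF fin unv Nv] by (simp add: d_def)
      also have "\<dots> = b / real d * ?S + rv"
        unfolding rv_def gv using alg_id[of "real d" b "g u" ?S] d0 by simp
      finally show ?thesis using 2 T uv by simp
    next
      case 3
      then show ?thesis using Nx[OF x] by (simp add: Top_def)
    qed
  qed
  define f where "f x = (1 - rv) * g2 x + (- ru) * g1 x + (-1) * g x" for x
  have f_fix: "\<forall>x\<in>V. f x = Top b V E' f x"
  proof
    fix x assume x: "x \<in> V"
    have Tf: "Top b V E' f x = (1 - rv) * Top b V E' g2 x + (- ru) * Top b V E' g1 x + (-1) * Top b V E' g x"
      unfolding f_def by (rule Top_lin3)
    have e2: "g2 x = (if x = v then 1 else 0) + Top b V E' g2 x" using g2 x by (simp add: sol_def)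
    have e1: "g1 x = (if x = u then 1 else 0) + Top b V E' g1 x" using g1 x by (simp add: sol_def)
    have e0: "g x = (if x = v then 1 else 0) + Top b V E g x" using g x by (simp add: sol_def)
    show "f x = Top b V E' f x"
      unfolding Tf f_def using e2 e1 e0 pert[OF x] by (simp add: algebra_simps split: if_splits)
  qed
  have f0: "\<forall>x\<in>V. f x = 0" using uniq[OF fin b0(3,2) f_fix] .
  have Dsum: "(\<Sum>x\<in>V. g2 x) - (\<Sum>x\<in>V. g x) = (ru + rv) * (\<Sum>x\<in>V. g2 x)"
  proof -
    have "\<forall>x\<in>V. g2 x - g x = ru * g1 x + rv * g2 x" using f0 unfolding f_def by (auto simp: algebra_simps)
    then have "(\<Sum>x\<in>V. g2 x - g x) = (\<Sum>x\<in>V. ru * g1 x + rv * g2 x)" by simp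
    then show ?thesis using C_eq by (simp add: sum_subtractf sum.distrib sum_distrib_left[symmetric] algebra_simps)
  qed
  have rpos: "0 < ru + rv"
  proof -
    have "ru + rv = (1 - \<alpha> * (g u + g v)) / (real d + 1)"
      unfolding ru_def rv_def b_def by (simp add: add_divide_distrib[symmetric] algebra_simps)
    moreover have "\<alpha> * (g u + g v) < 1" using key a0 by (simp add: field_simps)
    ultimately show ?thesis by simp
  qed
  have lt: "(\<Sum>x\<in>V. g x) < (\<Sum>x\<in>V. g2 x)"
    using Dsum rpos C_pos by (smt (verit) mult_pos_pos)
  moreover have nV: "0 < card V" using fin vV card_gt_0_iff by blast
  moreover have "pagerank \<alpha> (\<lambda>w. 1 / real (card V)) V E v = \<alpha> / real (card V) * (\<Sum>x\<in>V. g x)"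
    using pagerank_sol[OF fin a0 a1 vV nv] g b_def by simp
  moreover have "pagerank \<alpha> (\<lambda>w. 1 / real (card V)) V E' v = \<alpha> / real (card V) * (\<Sum>x\<in>V. g2 x)"
    using pagerank_sol[OF fin a0 a1 vV, of E'] g2 b_def Nv by simp
  moreover have "\<alpha> * (\<Sum>x\<in>V. g x) / real (card V) < \<alpha> * (\<Sum>x\<in>V. g2 x) / real (card V)"
  proof (rule divide_strict_right_mono)
    show "\<alpha> * (\<Sum>x\<in>V. g x) < \<alpha> * (\<Sum>x\<in>V. g2 x)"
      using \<open>(\<Sum>x\<in>V. g x) < (\<Sum>x\<in>V. g2 x)\<close> a0 by simp
    show "0 < real (card V)" using nV by simp
  qed
  ultimately show ?thesis unfolding E'_def by simp
qed

theorem theorem5p4: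
  fixes V :: "'a set" and E :: "'a set set" and \<alpha> :: real and u v :: 'a and \<sigma> :: "'a \<Rightarrow> 'a"
  assumes "simple_graph V E"
    and "0 < \<alpha>" and "\<alpha> < 1"
    and "u \<in> V" and "v \<in> V" and "u \<noteq> v" and "{u, v} \<notin> E"
    and "nbrs V E v \<noteq> {}"
    and "graph_automorphism V E \<sigma>" and "\<sigma> v = u" and "\<sigma> u = v"
  shows "pagerank \<alpha> (\<lambda>w. 1 / real (card V)) V (insert {u, v} E) v
           > pagerank \<alpha> (\<lambda>w. 1 / real (card V)) V E v
       \<and> pagerank \<alpha> (\<lambda>w. 1 / real (card V)) V (insert {u, v} E) u
           > pagerank \<alpha> (\<lambda>w. 1 / real (card V)) V E u"
proof
  show "pagerank \<alpha> (\<lambda>w. 1 / real (card V)) V (insert {u, v} E) v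
           > pagerank \<alpha> (\<lambda>w. 1 / real (card V)) V E v"
    by (rule main_v[OF assms])
  have nE: "{v, u} \<notin> E" using assms(7) by (simp add: insert_commute)
  have "nbrs V E u = \<sigma> ` nbrs V E v" using nbrs_aut[OF assms(9) assms(5)] assms(10) by simp
  then have nu: "nbrs V E u \<noteq> {}" using assms(8) by simp
  have "pagerank \<alpha> (\<lambda>w. 1 / real (card V)) V (insert {v, u} E) u
           > pagerank \<alpha> (\<lambda>w. 1 / real (card V)) V E u"
    by (rule main_v[OF assms(1-3) assms(5) assms(4) assms(6)[symmetric] nE nu assms(9) assms(11) assms(10)])
  then show "pagerank \<alpha> (\<lambda>w. 1 / real (card V)) V (insert {u, v} E) u
           > pagerank \<alpha> (\<lambda>w. 1 / real (card V)) V E u"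
    by (simp add: insert_commute)
qed

end
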